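(* In the linear deterministic diamond network with a disturbing node with gains $n_1,n_2,n_3,n_4,m$, suppose $n_1>n_2$, $n_4\ge n_3$ and $m\le n_2$. Then the linear capacity is $C=\min(n_1,\ n_4,\ n_2+n_3-m)$.
   Context: The shift matrix $Q$ is the $q\times q$ matrix over $\mathbb{F}_2$ with $Q_{i+1,i}=1$ for $1\le i\le q-1$ and all other entries $0$, where $q=\max(n_1,n_2,n_3,n_4,m)$ and all gains are nonnegative integers. Network: source $S$, relays $A,B$, destination $D$, disturbing node $M$; gains $n_1$ ($S\to A$), $n_2$ ($S\to B$), $n_3$ ($A\to D$), $n_4$ ($B\to D$), $m$ ($M\to A$ and $M\to B$). Each node transmits $x_i\in\mathbb{F}_2^q$ and receives $y_j=\sum_{k:(k,j)\text{ an edge}}Q^{q-n_{(k,j)}}x_k$; relays use linear maps $x_A=G_Ay_A$, $x_B=G_By_B$ with $G_A,G_B$ arbitrary $q\times q$ matrices over $\mathbb{F}_2$. Then $y_D=G_Sx_S+G_Mx_M$ with $G_S=Q^{q-n_3}G_AQ^{q-n_1}+Q^{q-n_4}G_BQ^{q-n_2}$ and $G_M=Q^{q-n_3}G_AQ^{q-m}+Q^{q-n_4}G_BQ^{q-m}$. The rate $R(G_A,G_B)$ is the maximum dimension of a subspace $\mathcal{X}\subseteq\mathbb{F}_2^q$ such that for all $x_S,x_S'\in\mathcal{X}$, $x_M,x_M'\in\mathbb{F}_2^q$, $G_Sx_S+G_Mx_M=G_Sx_S'+G_Mx_M'$ implies $x_S=x_S'$. The linear capacity is $C=\max_{G_A,G_B}R(G_A,G_B)$.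 *)

theory Defs
  imports "Jordan_Normal_Form.VS_Connect" "HOL-Library.Z2"
begin

text \<open>F_2 is the type bit (HOL-Library.Z2). Vectors/matrices are those of
  Jordan_Normal_Form, with 0-based indices.\<close>

definition qdim :: "nat \<Rightarrow> nat \<Rightarrow> nat \<Rightarrow> nat \<Rightarrow> nat \<Rightarrow> nat" where
  "qdim n1 n2 n3 n4 m = max n1 (max n2 (max n3 (max n4 m)))"

text \<open>Shift matrix: Q_{i+1,i} = 1 (1-based), i.e. entry (i+1,i) = 1 (0-based).\<close>
definition shiftQ :: "nat \<Rightarrow> bit mat" where
  "shiftQ q = mat q q (\<lambda>(i, j). if i = Suc j then 1 else 0)"

definition chanS :: "nat \<Rightarrow> nat \<Rightarrow> nat \<Rightarrow> nat \<Rightarrow> nat \<Rightarrow> bit mat \<Rightarrow> bit mat \<Rightarrow> bit mat" where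
  "chanS n1 n2 n3 n4 m GA GB =
    (let q = qdim n1 n2 n3 n4 m; Q = shiftQ q in
       Q ^\<^sub>m (q - n3) * GA * Q ^\<^sub>m (q - n1) + Q ^\<^sub>m (q - n4) * GB * Q ^\<^sub>m (q - n2))"

definition chanM :: "nat \<Rightarrow> nat \<Rightarrow> nat \<Rightarrow> nat \<Rightarrow> nat \<Rightarrow> bit mat \<Rightarrow> bit mat \<Rightarrow> bit mat" where
  "chanM n1 n2 n3 n4 m GA GB =
    (let q = qdim n1 n2 n3 n4 m; Q = shiftQ q in
       Q ^\<^sub>m (q - n3) * GA * Q ^\<^sub>m (q - m) + Q ^\<^sub>m (q - n4) * GB * Q ^\<^sub>m (q - m))"

text \<open>A subspace X of F_2^q is admissible if the source message is decodable
  at D irrespective of the disturbing node's input.\<close>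
definition admissible :: "nat \<Rightarrow> nat \<Rightarrow> nat \<Rightarrow> nat \<Rightarrow> nat \<Rightarrow> bit mat \<Rightarrow> bit mat \<Rightarrow> bit vec set \<Rightarrow> bool" where
  "admissible n1 n2 n3 n4 m GA GB X \<longleftrightarrow>
    (let q = qdim n1 n2 n3 n4 m; GS = chanS n1 n2 n3 n4 m GA GB; GM = chanM n1 n2 n3 n4 m GA GB in
      subspace class_ring X (module_vec TYPE(bit) q) \<and>
      (\<forall>xS\<in>X. \<forall>xS'\<in>X. \<forall>xM\<in>carrier_vec q. \<forall>xM'\<in>carrier_vec q.
         GS *\<^sub>v xS + GM *\<^sub>v xM = GS *\<^sub>v xS' + GM *\<^sub>v xM' \<longrightarrow> xS = xS'))"

definition rate :: "nat \<Rightarrow> nat \<Rightarrow> nat \<Rightarrow> nat \<Rightarrow> nat \<Rightarrow> bit mat \<Rightarrow> bit mat \<Rightarrow> nat" where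
  "rate n1 n2 n3 n4 m GA GB =
    Max {vectorspace.dim class_ring ((module_vec TYPE(bit) (qdim n1 n2 n3 n4 m))\<lparr>carrier := X\<rparr>) | X.
           admissible n1 n2 n3 n4 m GA GB X}"

definition linear_capacity :: "nat \<Rightarrow> nat \<Rightarrow> nat \<Rightarrow> nat \<Rightarrow> nat \<Rightarrow> nat" where
  "linear_capacity n1 n2 n3 n4 m =
    Max {rate n1 n2 n3 n4 m GA GB | GA GB.
           GA \<in> carrier_mat (qdim n1 n2 n3 n4 m) (qdim n1 n2 n3 n4 m) \<and>
           GB \<in> carrier_mat (qdim n1 n2 n3 n4 m) (qdim n1 n2 n3 n4 m)}"

end

theory Submission
  imports Defs
begin
lemma bit_add_self: "(x::bit) + x = 0"
  by (cases x) auto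
lemma bit_01: "(x::bit) = 0 \<or> x = 1"
  by (cases x) auto
lemma UNIV_bit: "(UNIV::bit set) = {0,1}"
  using bit_01 by blast
lemma card_bit: "card (UNIV::bit set) = 2"
  by (simp add: UNIV_bit)

lemma card_vs_bit:
  assumes vs: "vectorspace (class_ring :: bit ring) W" and fin: "finite (carrier W)"
  shows "card (carrier W) = 2 ^ vectorspace.dim class_ring W"
proof -
  interpret W: vectorspace "class_ring :: bit ring" W by (rule vs)
  have gen: "W.span (carrier W) = carrier W"
    using W.span_is_subset2[of "carrier W"] W.in_own_span[of "carrier W"] by auto
  have "W.fin_dim" unfolding W.fin_dim_def using fin gen by auto
  then obtain \<beta> where fb: "finite \<beta>" and b: "W.basis \<beta>" using W.finite_basis_exists by blast
  have dim: "W.dim = card \<beta>" using W.dim_basis[OF fb b] .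
  have bC: "\<beta> \<subseteq> carrier W" and li: "W.lin_indpt \<beta>" and sp: "W.span \<beta> = carrier W"
    using b unfolding W.basis_def by auto
  have bij: "bij_betw (\<lambda>a. W.lincomb a \<beta>) (\<beta> \<rightarrow>\<^sub>E (UNIV::bit set)) (carrier W)"
  proof (rule bij_betwI')
    fix a b assume a: "a \<in> \<beta> \<rightarrow>\<^sub>E (UNIV::bit set)" and bb: "b \<in> \<beta> \<rightarrow>\<^sub>E (UNIV::bit set)"
    show "(W.lincomb a \<beta> = W.lincomb b \<beta>) = (a = b)"
    proof
      assume eq: "W.lincomb a \<beta> = W.lincomb b \<beta>"
      have "W.lincomb (\<lambda>v. a v \<ominus>\<^bsub>class_ring\<^esub> b v) \<beta> = W.lincomb a \<beta> \<ominus>\<^bsub>W\<^esub> W.lincomb b \<beta>"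
        by (rule W.lincomb_diff[OF fb bC], auto simp: class_ring_simps)
      also have "\<dots> = \<zero>\<^bsub>W\<^esub>" using eq W.lincomb_closed[OF bC, of b] 
        by (simp add: class_ring_simps W.r_neg a_minus_def)
      finally have z: "W.lincomb (\<lambda>v. a v \<ominus>\<^bsub>class_ring\<^esub> b v) \<beta> = \<zero>\<^bsub>W\<^esub>" .
      have "\<forall>v\<in>\<beta>. a v = b v"
      proof (rule ccontr)
        assume "\<not> ?thesis"
        then obtain v where v: "v \<in> \<beta>" "a v \<noteq> b v" by auto
        have "W.lin_dep \<beta>"
          by (rule W.lin_dep_crit[OF fb subset_refl _ v(1) _ z]; unfold class_ring_simps; use bit_01[of "a v"] bit_01[of "b v"] v(2) in auto)
        thus False using li by simp
      qed
      thus "a = b" using a bb by (auto intro: PiE_ext)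
    qed simp
  next
    fix a assume "a \<in> \<beta> \<rightarrow>\<^sub>E (UNIV::bit set)"
    thus "W.lincomb a \<beta> \<in> carrier W" using bC by (intro W.lincomb_closed) (auto simp: class_ring_simps)
  next
    fix v assume "v \<in> carrier W"
    then obtain a where a: "a \<in> \<beta> \<rightarrow> carrier class_ring" "W.lincomb a \<beta> = v"
      using W.finite_in_span[OF fb bC] sp by auto
    have "W.lincomb (restrict a \<beta>) \<beta> = W.lincomb a \<beta>"
      by (rule W.lincomb_cong[OF refl bC], auto simp: a(1))
    thus "\<exists>a\<in>\<beta> \<rightarrow>\<^sub>E UNIV. v = W.lincomb a \<beta>" using a by (intro bexI[of _ "restrict a \<beta>"]) auto
  qed
  have "card (carrier W) = card (\<beta> \<rightarrow>\<^sub>E (UNIV::bit set))" using bij_betw_same_card[OF bij] by simp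
  also have "\<dots> = 2 ^ card \<beta>" by (simp add: card_PiE fb card_bit)
  finally show ?thesis using dim by simp
qed

definition sh :: "nat \<Rightarrow> nat \<Rightarrow> bit vec \<Rightarrow> bit vec" where
  "sh q k v = vec q (\<lambda>p. if k \<le> p then v $ (p - k) else 0)"

definition sel :: "nat \<Rightarrow> (nat \<Rightarrow> nat) \<Rightarrow> (nat \<Rightarrow> bool) \<Rightarrow> bit mat" where
  "sel q f P = mat q q (\<lambda>(i,j). if P i \<and> j = f i then 1 else 0)"

lemma sh_carrier[simp]: "sh q k v \<in> carrier_vec q"
  unfolding sh_def by simp
lemma sh_dim[simp]: "dim_vec (sh q k v) = q"
  unfolding sh_def by simp

lemma sh_index: "p < q \<Longrightarrow> sh q k v $ p = (if k \<le> p then v $ (p - k) else 0)"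
  unfolding sh_def by simp

lemma sel_carrier[simp]: "sel q f P \<in> carrier_mat q q"
  unfolding sel_def by simp
lemma sel_dim[simp]: "dim_row (sel q f P) = q" "dim_col (sel q f P) = q"
  unfolding sel_def by simp_all

lemma sum_delta_bit: "(\<Sum>j\<in>{0..<q::nat}. (if j = c then (x::bit) else 0)) = (if c < q then x else 0)"
proof -
  have "(\<Sum>j\<in>{0..<q}. (if j = c then (x::bit) else 0)) = (if c \<in> {0..<q} then x else 0)"
    by (rule sum.delta) simp
  thus ?thesis by simp
qed

lemma sel_mult: assumes "y \<in> carrier_vec q" "i < q"
  shows "(sel q f P *\<^sub>v y) $ i = (if P i \<and> f i < q then y $ (f i) else 0)"
proof -
  have "(sel q f P *\<^sub>v y) $ i = (\<Sum>j\<in>{0..<q}. (if P i \<and> j = f i then 1 else 0) * y $ j)"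
    using assms unfolding sel_def by (simp add: scalar_prod_def)
  also have "\<dots> = (\<Sum>j\<in>{0..<q}. (if j = f i then (if P i then y $ j else 0) else 0))"
    by (rule sum.cong) auto
  also have "\<dots> = (\<Sum>j\<in>{0..<q}. (if j = f i then (if P i then y $ (f i) else 0) else 0))"
    by (rule sum.cong) auto
  also have "\<dots> = (if P i \<and> f i < q then y $ (f i) else 0)"
    by (subst sum_delta_bit) auto
  finally show ?thesis .
qed

lemma shiftQ_carrier[simp]: "shiftQ q \<in> carrier_mat q q"
  unfolding shiftQ_def by simp

lemma shiftQ_mult: assumes "v \<in> carrier_vec q" shows "shiftQ q *\<^sub>v v = sh q 1 v"
proof -
  have "shiftQ q = sel q (\<lambda>i. i - 1) (\<lambda>i. 1 \<le> i)"
    unfolding shiftQ_def sel_def by (rule cong[of "mat q q"], simp) (auto simp: fun_eq_iff)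
  then show ?thesis using assms
    by (intro eq_vecI) (auto simp: sel_mult sh_index simp del: index_mult_mat_vec)
qed

lemma powQ_mult: "v \<in> carrier_vec q \<Longrightarrow> shiftQ q ^\<^sub>m k *\<^sub>v v = sh q k v"
proof (induction k arbitrary: v)
  case 0
  show ?case using 0 by (intro eq_vecI) (auto simp: sh_index shiftQ_def)
next
  case (Suc k)
  have "shiftQ q ^\<^sub>m Suc k *\<^sub>v v = shiftQ q ^\<^sub>m k *\<^sub>v (shiftQ q *\<^sub>v v)"
    using Suc.prems by (simp del: pow_mat.simps add: pow_mat.simps(2) assoc_mult_mat_vec[of _ q q _ q])
  also have "\<dots> = sh q k (sh q 1 v)" using Suc by (simp add: shiftQ_mult)
  also have "\<dots> = sh q (Suc k) v"
    by (intro eq_vecI) (auto simp: sh_index)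
  finally show ?case .
qed


lemma sh_add: assumes "u \<in> carrier_vec q" "w \<in> carrier_vec q"
  shows "sh q k (u + w) = sh q k u + sh q k w"
  using assms by (intro eq_vecI) (auto simp: sh_index)

lemma triple_carrier: "G \<in> carrier_mat q q \<Longrightarrow> shiftQ q ^\<^sub>m a * G * shiftQ q ^\<^sub>m b \<in> carrier_mat q q"
  "G \<in> carrier_mat q q \<Longrightarrow> shiftQ q ^\<^sub>m a * G \<in> carrier_mat q q"
  by (meson mult_carrier_mat pow_carrier_mat shiftQ_carrier)+

lemma triple_mult:
  assumes G: "G \<in> carrier_mat q q" and s: "s \<in> carrier_vec q"
  shows "(shiftQ q ^\<^sub>m a * G * shiftQ q ^\<^sub>m b) *\<^sub>v s = sh q a (G *\<^sub>v sh q b s)"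
proof -
  let ?Q = "shiftQ q"
  have c: "?Q ^\<^sub>m k \<in> carrier_mat q q" for k by simp
  have c2: "?Q ^\<^sub>m a * G \<in> carrier_mat q q" using G by (rule triple_carrier)
  have "(?Q ^\<^sub>m a * G * ?Q ^\<^sub>m b) *\<^sub>v s = (?Q ^\<^sub>m a * G) *\<^sub>v (?Q ^\<^sub>m b *\<^sub>v s)"
    by (rule assoc_mult_mat_vec[OF c2 c s])
  also have "\<dots> = ?Q ^\<^sub>m a *\<^sub>v (G *\<^sub>v (?Q ^\<^sub>m b *\<^sub>v s))"
    by (rule assoc_mult_mat_vec[OF c G], simp add: s mult_mat_vec_carrier[OF c s])
  also have "\<dots> = sh q a (G *\<^sub>v sh q b s)"
    using G s by (simp add: powQ_mult)
  finally show ?thesis .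
qed

lemma GS_mult:
  assumes q: "q = qdim n1 n2 n3 n4 m" and GA: "GA \<in> carrier_mat q q" and GB: "GB \<in> carrier_mat q q"
    and s: "s \<in> carrier_vec q"
  shows "chanS n1 n2 n3 n4 m GA GB *\<^sub>v s = sh q (q-n3) (GA *\<^sub>v sh q (q-n1) s) + sh q (q-n4) (GB *\<^sub>v sh q (q-n2) s)"
proof -
  let ?Q = "shiftQ q"
  have "chanS n1 n2 n3 n4 m GA GB = ?Q ^\<^sub>m (q - n3) * GA * ?Q ^\<^sub>m (q - n1) + ?Q ^\<^sub>m (q - n4) * GB * ?Q ^\<^sub>m (q - n2)"
    unfolding chanS_def q Let_def ..
  also have "\<dots> *\<^sub>v s = (?Q ^\<^sub>m (q - n3) * GA * ?Q ^\<^sub>m (q - n1)) *\<^sub>v s + (?Q ^\<^sub>m (q - n4) * GB * ?Q ^\<^sub>m (q - n2)) *\<^sub>v s"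
    using GA GB s by (intro add_mult_distrib_mat_vec[of _ q q]) (auto intro: triple_carrier)
  finally show ?thesis using GA GB s by (simp add: triple_mult)
qed

lemma GM_mult:
  assumes q: "q = qdim n1 n2 n3 n4 m" and GA: "GA \<in> carrier_mat q q" and GB: "GB \<in> carrier_mat q q"
    and s: "s \<in> carrier_vec q"
  shows "chanM n1 n2 n3 n4 m GA GB *\<^sub>v s = sh q (q-n3) (GA *\<^sub>v sh q (q-m) s) + sh q (q-n4) (GB *\<^sub>v sh q (q-m) s)"
proof -
  let ?Q = "shiftQ q"
  have "chanM n1 n2 n3 n4 m GA GB = ?Q ^\<^sub>m (q - n3) * GA * ?Q ^\<^sub>m (q - m) + ?Q ^\<^sub>m (q - n4) * GB * ?Q ^\<^sub>m (q - m)"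
    unfolding chanM_def q Let_def ..
  also have "\<dots> *\<^sub>v s = (?Q ^\<^sub>m (q - n3) * GA * ?Q ^\<^sub>m (q - m)) *\<^sub>v s + (?Q ^\<^sub>m (q - n4) * GB * ?Q ^\<^sub>m (q - m)) *\<^sub>v s"
    using GA GB s by (intro add_mult_distrib_mat_vec[of _ q q]) (auto intro: triple_carrier)
  finally show ?thesis using GA GB s by (simp add: triple_mult)
qed

lemma out_eq:
  assumes q: "q = qdim n1 n2 n3 n4 m" and GA: "GA \<in> carrier_mat q q" and GB: "GB \<in> carrier_mat q q"
    and s: "s \<in> carrier_vec q" and z: "z \<in> carrier_vec q"
  shows "chanS n1 n2 n3 n4 m GA GB *\<^sub>v s + chanM n1 n2 n3 n4 m GA GB *\<^sub>v z =
    sh q (q-n3) (GA *\<^sub>v (sh q (q-n1) s + sh q (q-m) z)) + sh q (q-n4) (GB *\<^sub>v (sh q (q-n2) s + sh q (q-m) z))"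
  unfolding GS_mult[OF assms(1-4)] GM_mult[OF assms(1-3,5)]
  using GA GB by (intro eq_vecI) (auto simp: mult_add_distrib_mat_vec[of _ q q] sh_add)


definition supv :: "nat \<Rightarrow> nat set \<Rightarrow> bit vec set" where
  "supv q T = {v \<in> carrier_vec q. \<forall>i<q. i \<notin> T \<longrightarrow> v $ i = 0}"

lemma card_supv: assumes T: "T \<subseteq> {..<q}" shows "card (supv q T) = 2 ^ card T"
proof -
  have fT: "finite T" using T finite_subset by blast
  have "bij_betw (\<lambda>v. restrict (\<lambda>i. v $ i) T) (supv q T) (T \<rightarrow>\<^sub>E (UNIV::bit set))"
  proof (rule bij_betwI[where g = "\<lambda>f. vec q (\<lambda>i. if i \<in> T then f i else 0)"])
    show "(\<lambda>v. restrict (\<lambda>i. v $ i) T) \<in> supv q T \<rightarrow> T \<rightarrow>\<^sub>E UNIV" by auto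
    show "(\<lambda>f. vec q (\<lambda>i. if i \<in> T then f i else 0)) \<in> (T \<rightarrow>\<^sub>E UNIV) \<rightarrow> supv q T"
      unfolding supv_def by auto
    fix v assume "v \<in> supv q T"
    thus "vec q (\<lambda>i. if i \<in> T then restrict (\<lambda>i. v $ i) T i else 0) = v"
      unfolding supv_def by (intro eq_vecI) auto
  next
    fix f assume f: "f \<in> T \<rightarrow>\<^sub>E (UNIV::bit set)"
    show "restrict (\<lambda>i. vec q (\<lambda>i. if i \<in> T then f i else 0) $ i) T = f"
      using f T by (intro PiE_ext[OF _ f]) auto
  qed
  hence "card (supv q T) = card (T \<rightarrow>\<^sub>E (UNIV::bit set))" by (rule bij_betw_same_card)
  also have "\<dots> = 2 ^ card T" by (simp add: card_PiE fT card_bit)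
  finally show ?thesis .
qed

lemma finite_supv: "finite (supv q T)"
proof -
  have "card (supv q {..<q}) > 0" by (simp add: card_supv)
  hence "finite (supv q {..<q})" using card_ge_0_finite by blast
  moreover have "supv q T \<subseteq> supv q {..<q}" unfolding supv_def by auto
  ultimately show ?thesis using finite_subset by blast
qed

lemma supv_all: "supv q {..<q} = carrier_vec q"
  unfolding supv_def by auto

lemma finite_carrier_vec_bit: "finite (carrier_vec q :: bit vec set)"
  using finite_supv[of q "{..<q}"] by (simp add: supv_all)

lemma card_le_supv: assumes "T \<subseteq> {..<q}" "S \<subseteq> supv q T" shows "card S \<le> 2 ^ card T"
  using card_mono[OF finite_supv assms(2)] card_supv[OF assms(1)] by simp

lemma subspace_supv: "subspace class_ring (supv q T) (module_vec TYPE(bit) q)"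
proof (rule subspace.intro[OF vec_vs])
  show "submodule class_ring (supv q T) (module_vec TYPE(bit) q)"
    by (rule submodule.intro[OF vec_module]) (auto simp: supv_def module_vec_simps)
qed

lemma dim_eq_card:
  assumes "subspace class_ring X (module_vec TYPE(bit) q)"
  shows "card X = 2 ^ vectorspace.dim class_ring ((module_vec TYPE(bit) q)\<lparr>carrier := X\<rparr>)"
proof -
  have vs: "vectorspace class_ring ((module_vec TYPE(bit) q)\<lparr>carrier := X\<rparr>)"
    by (rule vectorspace.subspace_is_vs[OF vec_vs assms])
  have "X \<subseteq> carrier_vec q" using assms unfolding subspace_def submodule_def
    by (auto simp: module_vec_simps)
  hence "finite X" using finite_carrier_vec_bit finite_subset by blast
  thus ?thesis using card_vs_bit[OF vs] by simp
qed


lemma adm_D: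
  assumes "admissible n1 n2 n3 n4 m GA GB X" and q: "q = qdim n1 n2 n3 n4 m"
  shows "subspace class_ring X (module_vec TYPE(bit) q)" "X \<subseteq> carrier_vec q"
    "\<And>s s' z z'. s \<in> X \<Longrightarrow> s' \<in> X \<Longrightarrow> z \<in> carrier_vec q \<Longrightarrow> z' \<in> carrier_vec q \<Longrightarrow>
      chanS n1 n2 n3 n4 m GA GB *\<^sub>v s + chanM n1 n2 n3 n4 m GA GB *\<^sub>v z =
      chanS n1 n2 n3 n4 m GA GB *\<^sub>v s' + chanM n1 n2 n3 n4 m GA GB *\<^sub>v z' \<Longrightarrow> s = s'"
proof -
  show sub: "subspace class_ring X (module_vec TYPE(bit) q)" using assms unfolding admissible_def Let_def by auto
  show "X \<subseteq> carrier_vec q" using sub unfolding subspace_def submodule_def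
    by (auto simp: module_vec_simps)
  fix s s' z z' assume "s \<in> X" "s' \<in> X" "z \<in> carrier_vec q" "z' \<in> carrier_vec q"
    "chanS n1 n2 n3 n4 m GA GB *\<^sub>v s + chanM n1 n2 n3 n4 m GA GB *\<^sub>v z =
      chanS n1 n2 n3 n4 m GA GB *\<^sub>v s' + chanM n1 n2 n3 n4 m GA GB *\<^sub>v z'"
  thus "s = s'" using assms unfolding admissible_def Let_def by blast
qed

lemma qdim_ge: "q = qdim n1 n2 n3 n4 m \<Longrightarrow> n1 \<le> q \<and> n2 \<le> q \<and> n3 \<le> q \<and> n4 \<le> q \<and> m \<le> q"
  unfolding qdim_def by (simp add: le_max_iff_disj)

lemma card_inj_supv:
  assumes "inj_on f X" "f ` X \<subseteq> supv q T" "T \<subseteq> {..<q}"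
  shows "card X \<le> 2 ^ card T"
  using card_le_supv[OF assms(3,2)] card_image[OF assms(1)] by simp

lemma converse_bound:
  assumes h: "n1 > n2" "n4 \<ge> n3" "m \<le> n2"
    and q: "q = qdim n1 n2 n3 n4 m" and GA: "GA \<in> carrier_mat q q" and GB: "GB \<in> carrier_mat q q"
    and adm: "admissible n1 n2 n3 n4 m GA GB X"
  shows "card X \<le> 2 ^ n1" "card X \<le> 2 ^ n4" "card X \<le> 2 ^ (n2 + n3 - m)"
proof -
  have qg: "n1 \<le> q" "n2 \<le> q" "n3 \<le> q" "n4 \<le> q" "m \<le> q" using qdim_ge[OF q] by auto
  note Xc = adm_D(2)[OF adm q]
  note inj = adm_D(3)[OF adm q]
  let ?GS = "chanS n1 n2 n3 n4 m GA GB" and ?GM = "chanM n1 n2 n3 n4 m GA GB"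
  have GSeq: "?GS *\<^sub>v s = ?GS *\<^sub>v s' \<Longrightarrow> s \<in> X \<Longrightarrow> s' \<in> X \<Longrightarrow> s = s'" for s s'
    using inj[of s s' "0\<^sub>v q" "0\<^sub>v q"] by auto
  let ?f = "\<lambda>s. vec q (\<lambda>i. if i < n1 then s $ i else 0)"
  have "inj_on ?f X"
  proof (rule inj_onI)
    fix s s' assume s: "s \<in> X" "s' \<in> X" and e: "?f s = ?f s'"
    have ei: "s $ i = s' $ i" if "i < n1" for i
      using arg_cong[OF e, of "\<lambda>v. v $ i"] that qg by auto
    have e1: "sh q (q - n1) s = sh q (q - n1) s'" "sh q (q - n2) s = sh q (q - n2) s'"
      using ei h qg by (auto intro!: eq_vecI simp: sh_index)
    have sc: "s \<in> carrier_vec q" "s' \<in> carrier_vec q" using s Xc by auto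
    have "?GS *\<^sub>v s = ?GS *\<^sub>v s'" by (simp only: GS_mult[OF q GA GB sc(1)] GS_mult[OF q GA GB sc(2)] e1)
    thus "s = s'" using GSeq s by auto
  qed
  moreover have "?f ` X \<subseteq> supv q {..<n1}" unfolding supv_def by auto
  ultimately show "card X \<le> 2 ^ n1" using card_inj_supv[of ?f X q "{..<n1}"] qg by auto
next
  have qg: "n1 \<le> q" "n2 \<le> q" "n3 \<le> q" "n4 \<le> q" "m \<le> q" using qdim_ge[OF q] by auto
  note Xc = adm_D(2)[OF adm q]
  note inj = adm_D(3)[OF adm q]
  let ?GS = "chanS n1 n2 n3 n4 m GA GB" and ?GM = "chanM n1 n2 n3 n4 m GA GB"
  have GSeq: "?GS *\<^sub>v s = ?GS *\<^sub>v s' \<Longrightarrow> s \<in> X \<Longrightarrow> s' \<in> X \<Longrightarrow> s = s'" for s s'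
    using inj[of s s' "0\<^sub>v q" "0\<^sub>v q"] by auto
  have "inj_on (\<lambda>s. ?GS *\<^sub>v s) X" by (rule inj_onI) (use GSeq in auto)
  moreover have "(\<lambda>s. ?GS *\<^sub>v s) ` X \<subseteq> supv q {q-n4..<q}"
  proof
    fix v assume "v \<in> (\<lambda>s. ?GS *\<^sub>v s) ` X"
    then obtain s where s: "s \<in> X" "v = ?GS *\<^sub>v s" by auto
    have sc: "s \<in> carrier_vec q" using s Xc by auto
    show "v \<in> supv q {q-n4..<q}" unfolding s(2) GS_mult[OF q GA GB sc] supv_def
      using h by (auto simp: sh_index)
  qed
  ultimately have "card X \<le> 2 ^ card {q-n4..<q}" by (rule card_inj_supv) auto
  thus "card X \<le> 2 ^ n4" using qg by simp
next
  have qg: "n1 \<le> q" "n2 \<le> q" "n3 \<le> q" "n4 \<le> q" "m \<le> q" using qdim_ge[OF q] by auto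
  note Xc = adm_D(2)[OF adm q]
  note inj = adm_D(3)[OF adm q]
  let ?GS = "chanS n1 n2 n3 n4 m GA GB" and ?GM = "chanM n1 n2 n3 n4 m GA GB"
  define zf where "zf s = vec q (\<lambda>j. if j < m then s $ (n2 - m + j) else (0::bit))" for s
  have zfc: "zf s \<in> carrier_vec q" for s unfolding zf_def by simp
  let ?F = "\<lambda>s. ?GS *\<^sub>v s + ?GM *\<^sub>v zf s"
  have "inj_on ?F X" by (rule inj_onI, erule (1) inj[OF _ _ zfc zfc])
  let ?W = "supv q {q-n2..<q-m}" and ?U = "supv q {q-n3..<q}"
  let ?g = "\<lambda>(w,u). u + sh q (q-n4) (GB *\<^sub>v w)"
  have "?F ` X \<subseteq> ?g ` (?W \<times> ?U)"
  proof
    fix v assume "v \<in> ?F ` X"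
    then obtain s where s: "s \<in> X" "v = ?F s" by auto
    have sc: "s \<in> carrier_vec q" using s Xc by auto
    let ?yA = "sh q (q-n1) s + sh q (q-m) (zf s)" and ?yB = "sh q (q-n2) s + sh q (q-m) (zf s)"
    have v: "v = sh q (q-n3) (GA *\<^sub>v ?yA) + sh q (q-n4) (GB *\<^sub>v ?yB)"
      unfolding s(2) by (rule out_eq[OF q GA GB sc zfc])
    have W: "?yB \<in> ?W" unfolding supv_def
    proof (intro CollectI conjI allI impI)
      fix i assume i: "i < q" "i \<notin> {q - n2..<q - m}"
      show "?yB $ i = 0"
      proof (cases "i < q - n2")
        case True thus ?thesis using i h qg by (auto simp: sh_index)
      next
        case False
        hence "q - m \<le> i" using i by auto
        moreover have "n2 - m + (i - (q - m)) = i - (q - n2)" using h qg `q - m \<le> i` by auto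
        ultimately show ?thesis using i h qg by (auto simp: sh_index zf_def bit_add_self)
      qed
    qed simp
    have U: "sh q (q-n3) (GA *\<^sub>v ?yA) \<in> ?U" unfolding supv_def by (auto simp: sh_index)
    show "v \<in> ?g ` (?W \<times> ?U)" using W U v by force
  qed
  have fin: "finite (?W \<times> ?U)" by (auto intro: finite_cartesian_product finite_supv)
  have "card (?F ` X) \<le> card (?g ` (?W \<times> ?U))"
    by (rule card_mono[OF finite_imageI[OF fin]]) fact
  also have "\<dots> \<le> card (?W \<times> ?U)" by (rule card_image_le[OF fin])
  also have "\<dots> = 2 ^ (n2 - m) * 2 ^ n3"
  proof -
    have s1: "{q-n2..<q-m} \<subseteq> {..<q}" "{q-n3..<q} \<subseteq> {..<q}" by auto
    have c1: "card ?W = 2 ^ (n2 - m)" using card_supv[OF s1(1)] qg h by simp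
    have c2: "card ?U = 2 ^ n3" using card_supv[OF s1(2)] qg h by simp
    show ?thesis by (simp only: card_cartesian_product c1 c2)
  qed
  also have "\<dots> = 2 ^ (n2 + n3 - m)" using h by (simp add: power_add[symmetric])
  finally show "card X \<le> 2 ^ (n2 + n3 - m)" using card_image[OF \<open>inj_on ?F X\<close>] by simp
qed


declare add_bit_eq_xor[simp del] mult_bit_eq_and[simp del]

lemma bit_cancel: "(a::bit) + x + (b + x) = a + b"
  by (metis add.assoc add.commute bit_add_self add_0_right)

lemma bit_cancel2: "(a::bit) + c = b + c \<Longrightarrow> a = b"
  by simp

definition GAc :: "nat \<Rightarrow> nat \<Rightarrow> bit mat" where
  "GAc q n3 = sel q (\<lambda>i. i + (q - n3)) (\<lambda>_. True)"

definition GBc :: "nat \<Rightarrow> nat \<Rightarrow> nat \<Rightarrow> nat \<Rightarrow> nat \<Rightarrow> nat \<Rightarrow> bit mat" where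
  "GBc q n2 n3 n4 c b = sel q (\<lambda>i. if q - c \<le> i + (q - n4) then i + (q - n4) else 2*q - n2 - n3 - 1 - (i + (q - n4)))
      (\<lambda>i. q - c \<le> i + (q - n4) \<or> (q - n3 - b \<le> i + (q - n4) \<and> i + (q - n4) < q - n3))"

lemma out_entry:
  assumes yA: "yA \<in> carrier_vec q" and yB: "yB \<in> carrier_vec q" and p: "p < q"
    and h: "c \<le> n3" "n3 \<le> n4" "n4 \<le> q" "b \<le> n4 - n3" "b \<le> n2"
  shows "(sh q (q-n3) (GAc q n3 *\<^sub>v yA) + sh q (q-n4) (GBc q n2 n3 n4 c b *\<^sub>v yB)) $ p =
    (if q - n3 \<le> p then yA $ p else 0) +
    (if q - c \<le> p then yB $ p else if q - n3 - b \<le> p \<and> p < q - n3 then yB $ (2*q - n2 - n3 - 1 - p) else 0)"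
proof -
  have A: "sh q (q-n3) (GAc q n3 *\<^sub>v yA) $ p = (if q - n3 \<le> p then yA $ p else 0)"
    using p yA by (auto simp: sh_index GAc_def sel_mult simp del: index_mult_mat_vec)
  have B: "sh q (q-n4) (GBc q n2 n3 n4 c b *\<^sub>v yB) $ p =
    (if q - c \<le> p then yB $ p else if q - n3 - b \<le> p \<and> p < q - n3 then yB $ (2*q - n2 - n3 - 1 - p) else 0)"
  proof (cases "q - n4 \<le> p")
    case True
    have e: "p - (q - n4) + (q - n4) = p" using True by simp
    have lt: "p - (q - n4) < q" using p by simp
    have s1: "sh q (q-n4) (GBc q n2 n3 n4 c b *\<^sub>v yB) $ p = (GBc q n2 n3 n4 c b *\<^sub>v yB) $ (p - (q-n4))"
      using True p by (simp add: sh_index)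
    have s2: "(GBc q n2 n3 n4 c b *\<^sub>v yB) $ (p - (q-n4)) =
      (if (q - c \<le> p \<or> (q - n3 - b \<le> p \<and> p < q - n3)) \<and> (if q - c \<le> p then p else 2*q - n2 - n3 - 1 - p) < q
       then yB $ (if q - c \<le> p then p else 2*q - n2 - n3 - 1 - p) else 0)"
      unfolding GBc_def sel_mult[OF yB lt] e ..
    show ?thesis unfolding s1 s2 using p h by auto

  next
    case False
    thus ?thesis using p h by (auto simp: sh_index)
  qed
  show ?thesis using A B p by simp
qed


locale constr =
  fixes n1 n2 n3 n4 m q :: nat
  assumes h: "n1 > n2" "n4 \<ge> n3" "m \<le> n2" and q: "q = qdim n1 n2 n3 n4 m"
begin

definition "a0 = n1 - min n1 n3"
definition "b = min a0 (min (n2 - m) (n4 - n3))"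
definition "c = min m n3"
definition "J = {..<b} \<union> {a0..<n1}"
definition "Out s z = sh q (q-n3) (GAc q n3 *\<^sub>v (sh q (q-n1) s + sh q (q-m) z)) +
   sh q (q-n4) (GBc q n2 n3 n4 c b *\<^sub>v (sh q (q-n2) s + sh q (q-m) z))"

lemma qg: "n1 \<le> q" "n2 \<le> q" "n3 \<le> q" "n4 \<le> q" "m \<le> q" using qdim_ge[OF q] by auto

lemma Oentry: assumes s: "s \<in> carrier_vec q" and z: "z \<in> carrier_vec q" and p: "p < q"
  shows "Out s z $ p = (if q - n3 \<le> p then (sh q (q-n1) s + sh q (q-m) z) $ p else 0) +
    (if q - c \<le> p then (sh q (q-n2) s + sh q (q-m) z) $ p
     else if q - n3 - b \<le> p \<and> p < q - n3 then (sh q (q-n2) s + sh q (q-m) z) $ (2*q - n2 - n3 - 1 - p) else 0)"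
  unfolding Out_def
  by (rule out_entry) (use p qg h in \<open>auto simp: c_def b_def\<close>)

lemma K1: assumes s: "s \<in> carrier_vec q" and z: "z \<in> carrier_vec q" and j: "j < b"
  shows "Out s z $ (q - n3 - 1 - j) = s $ j"
proof -
  have jb: "j < n2 - m" "j < n4 - n3" using j unfolding b_def by auto
  let ?p = "q - n3 - 1 - j"
  have p: "?p < q" using jb qg by auto
  have r: "2*q - n2 - n3 - 1 - ?p = q - n2 + j" using jb qg h by auto
  have "Out s z $ ?p = (sh q (q-n2) s + sh q (q-m) z) $ (q - n2 + j)"
    unfolding Oentry[OF s z p] r using j jb qg h by (auto simp: c_def)
  also have "\<dots> = s $ j" using jb qg h by (auto simp: sh_index)
  finally show ?thesis .
qed

lemma K2: assumes s: "s \<in> carrier_vec q" and z: "z \<in> carrier_vec q" and j: "a0 \<le> j" "j < n1"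
  and pc: "q - c \<le> q - n1 + j"
  shows "Out s z $ (q - n1 + j) = s $ j + s $ (j - (n1 - n2))"
proof -
  let ?p = "q - n1 + j"
  have p: "?p < q" using j qg by auto
  have "Out s z $ ?p = (sh q (q-n1) s + sh q (q-m) z) $ ?p + (sh q (q-n2) s + sh q (q-m) z) $ ?p"
    unfolding Oentry[OF s z p] using j qg h pc by (auto simp: c_def a0_def)
  also have "\<dots> = (s $ j + z $ (?p - (q - m))) + (s $ (j - (n1 - n2)) + z $ (?p - (q - m)))"
    using j qg h pc p by (auto simp: sh_index c_def)
  also have "\<dots> = s $ j + s $ (j - (n1 - n2))" by (rule bit_cancel)
  finally show ?thesis .
qed

lemma K3: assumes s: "s \<in> carrier_vec q" and z: "z \<in> carrier_vec q" and j: "a0 \<le> j" "j < n1"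
  and pc: "\<not> q - c \<le> q - n1 + j"
  shows "Out s z $ (q - n1 + j) = s $ j"
proof -
  let ?p = "q - n1 + j"
  have p: "?p < q" using j qg by auto
  have "Out s z $ ?p = (sh q (q-n1) s + sh q (q-m) z) $ ?p"
    unfolding Oentry[OF s z p] using j qg h pc by (auto simp: c_def a0_def)
  also have "\<dots> = s $ j"
    using j qg h pc p by (auto simp: sh_index c_def a0_def)
  finally show ?thesis .
qed

lemma J_sub: "J \<subseteq> {..<q}" unfolding J_def b_def a0_def using qg by auto

lemma card_J: "card J = min n1 (min n4 (n2 + n3 - m))"
proof -
  have ba: "b \<le> a0" unfolding b_def by auto
  have "card J = card {..<b} + card {a0..<n1}" unfolding J_def
    by (rule card_Un_disjoint) (use ba in auto)
  also have "\<dots> = b + (n1 - a0)" by simp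
  also have "\<dots> = min n1 (min n4 (n2 + n3 - m))" unfolding b_def a0_def using h
    unfolding min_def by (auto split: if_splits)
  finally show ?thesis .
qed

lemma inj_Out:
  assumes s: "s \<in> supv q J" and s': "s' \<in> supv q J" and z: "z \<in> carrier_vec q" and z': "z' \<in> carrier_vec q"
    and e: "Out s z = Out s' z'"
  shows "j < q \<Longrightarrow> s $ j = s' $ j"
proof (induction j rule: less_induct)
  case (less j)
  have sc: "s \<in> carrier_vec q" "s' \<in> carrier_vec q" using s s' unfolding supv_def by auto
  show ?case
  proof (cases "j \<in> J")
    case False
    thus ?thesis using s s' less.prems unfolding supv_def by auto
  next
    case True
    hence "j < b \<or> (a0 \<le> j \<and> j < n1)" unfolding J_def by auto
    thus ?thesis
    proof
      assume "j < b"
      thus ?thesis using K1[OF sc(1) z] K1[OF sc(2) z'] e by metis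
    next
      assume j: "a0 \<le> j \<and> j < n1"
      show ?thesis
      proof (cases "q - c \<le> q - n1 + j")
        case True
        have jj: "j - (n1 - n2) < j" "n1 - n2 \<le> j" using True j h qg unfolding c_def by auto
        have "s $ j + s $ (j - (n1 - n2)) = s' $ j + s' $ (j - (n1 - n2))"
          using K2[OF sc(1) z _ _ True] K2[OF sc(2) z' _ _ True] e j by metis
        moreover have "s $ (j - (n1 - n2)) = s' $ (j - (n1 - n2))"
          using less.IH[OF jj(1)] less.prems by auto
        ultimately show ?thesis by (metis bit_cancel2)
      next
        case False
        thus ?thesis using K3[OF sc(1) z _ _ False] K3[OF sc(2) z' _ _ False] e j by metis
      qed
    qed
  qed
qed

lemma adm: "admissible n1 n2 n3 n4 m (GAc q n3) (GBc q n2 n3 n4 c b) (supv q J)"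
  unfolding admissible_def Let_def q[symmetric]
proof (intro conjI ballI impI)
  show "subspace class_ring (supv q J) (module_vec TYPE(bit) q)" by (rule subspace_supv)
  fix s s' z z' assume s: "s \<in> supv q J" and s': "s' \<in> supv q J" and z: "z \<in> carrier_vec q"
    and z': "z' \<in> carrier_vec q"
    and e: "chanS n1 n2 n3 n4 m (GAc q n3) (GBc q n2 n3 n4 c b) *\<^sub>v s + chanM n1 n2 n3 n4 m (GAc q n3) (GBc q n2 n3 n4 c b) *\<^sub>v z =
       chanS n1 n2 n3 n4 m (GAc q n3) (GBc q n2 n3 n4 c b) *\<^sub>v s' + chanM n1 n2 n3 n4 m (GAc q n3) (GBc q n2 n3 n4 c b) *\<^sub>v z'"
  have sc: "s \<in> carrier_vec q" "s' \<in> carrier_vec q" using s s' unfolding supv_def by auto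
  have GA: "GAc q n3 \<in> carrier_mat q q" and GB: "GBc q n2 n3 n4 c b \<in> carrier_mat q q"
    unfolding GAc_def GBc_def by simp_all
  have "Out s z = Out s' z'" using e unfolding Out_def out_eq[OF q GA GB sc(1) z] out_eq[OF q GA GB sc(2) z'] .
  thus "s = s'" using inj_Out[OF s s' z z'] sc by (intro eq_vecI) auto
qed

end



lemma adm0: "admissible n1 n2 n3 n4 m GA GB (supv (qdim n1 n2 n3 n4 m) {})"
  unfolding admissible_def Let_def
proof (intro conjI ballI impI)
  show "subspace class_ring (supv (qdim n1 n2 n3 n4 m) {}) (module_vec TYPE(bit) (qdim n1 n2 n3 n4 m))"
    by (rule subspace_supv)
qed (auto intro!: eq_vecI simp: supv_def)

lemma two_pow_le: "(2::nat) ^ a \<le> 2 ^ b \<Longrightarrow> a \<le> b"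
  by simp

lemma rate_le:
  assumes h: "n1 > n2" "n4 \<ge> n3" "m \<le> n2"
    and GA: "GA \<in> carrier_mat (qdim n1 n2 n3 n4 m) (qdim n1 n2 n3 n4 m)"
    and GB: "GB \<in> carrier_mat (qdim n1 n2 n3 n4 m) (qdim n1 n2 n3 n4 m)"
  shows "\<And>X. admissible n1 n2 n3 n4 m GA GB X \<Longrightarrow>
     vectorspace.dim class_ring ((module_vec TYPE(bit) (qdim n1 n2 n3 n4 m))\<lparr>carrier := X\<rparr>) \<le> min n1 (min n4 (n2 + n3 - m))"
    and "rate n1 n2 n3 n4 m GA GB \<le> min n1 (min n4 (n2 + n3 - m))"
proof -
  define q where "q = qdim n1 n2 n3 n4 m"
  let ?R = "min n1 (min n4 (n2 + n3 - m))"
  show dle: "vectorspace.dim class_ring ((module_vec TYPE(bit) (qdim n1 n2 n3 n4 m))\<lparr>carrier := X\<rparr>) \<le> ?R"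
    if adm: "admissible n1 n2 n3 n4 m GA GB X" for X
  proof -
    have ce: "card X = 2 ^ vectorspace.dim class_ring ((module_vec TYPE(bit) (qdim n1 n2 n3 n4 m))\<lparr>carrier := X\<rparr>)"
      by (rule dim_eq_card[OF adm_D(1)[OF adm refl]])
    have b: "card X \<le> 2 ^ n1" "card X \<le> 2 ^ n4" "card X \<le> 2 ^ (n2 + n3 - m)"
      using converse_bound[OF h refl GA GB adm] by auto
    have "card X \<le> 2 ^ ?R" using b by (auto simp: min_def)
    thus ?thesis using ce by simp
  qed
  let ?D = "{vectorspace.dim class_ring ((module_vec TYPE(bit) (qdim n1 n2 n3 n4 m))\<lparr>carrier := X\<rparr>) | X.
           admissible n1 n2 n3 n4 m GA GB X}"
  have sub: "?D \<subseteq> {..?R}" using dle by auto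
  have ne: "?D \<noteq> {}" using adm0 by blast
  have "Max ?D \<le> ?R" using sub ne finite_subset[OF sub] by (subst Max_le_iff) auto
  thus "rate n1 n2 n3 n4 m GA GB \<le> ?R" unfolding rate_def .
qed

theorem mainTheorem6:
  fixes n1 n2 n3 n4 m :: nat
  assumes "n1 > n2" and "n4 \<ge> n3" and "m \<le> n2"
  shows "linear_capacity n1 n2 n3 n4 m = min n1 (min n4 (n2 + n3 - m))"
proof -
  define q where "q = qdim n1 n2 n3 n4 m"
  let ?R = "min n1 (min n4 (n2 + n3 - m))"
  interpret C: constr n1 n2 n3 n4 m q using assms q_def by unfold_locales auto
  let ?GA = "GAc q n3" and ?GB = "GBc q n2 n3 n4 C.c C.b"
  have GA: "?GA \<in> carrier_mat q q" and GB: "?GB \<in> carrier_mat q q"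
    unfolding GAc_def GBc_def by simp_all
  have rateR: "rate n1 n2 n3 n4 m ?GA ?GB = ?R"
  proof -
    let ?D = "{vectorspace.dim class_ring ((module_vec TYPE(bit) q)\<lparr>carrier := X\<rparr>) | X.
           admissible n1 n2 n3 n4 m ?GA ?GB X}"
    note RL = rate_le(1)[OF assms GA[unfolded q_def] GB[unfolded q_def], folded q_def]
    have dle: "d \<le> ?R" if "d \<in> ?D" for d
    proof -
      from that obtain X where X: "d = vectorspace.dim class_ring ((module_vec TYPE(bit) q)\<lparr>carrier := X\<rparr>)"
        "admissible n1 n2 n3 n4 m ?GA ?GB X" by (auto simp only: mem_Collect_eq)
      show ?thesis unfolding X(1) by (rule RL[OF X(2)])
    qed
    have rD: "rate n1 n2 n3 n4 m ?GA ?GB = Max ?D" unfolding rate_def q_def ..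
    have "2 ^ vectorspace.dim class_ring ((module_vec TYPE(bit) q)\<lparr>carrier := supv q C.J\<rparr>) = card (supv q C.J)"
      using dim_eq_card[OF subspace_supv] by simp
    also have "\<dots> = 2 ^ ?R" using card_supv[OF C.J_sub] C.card_J by simp
    finally have "vectorspace.dim class_ring ((module_vec TYPE(bit) q)\<lparr>carrier := supv q C.J\<rparr>) = ?R"
      by simp
    hence "?R \<in> ?D" using C.adm by (intro CollectI exI[of _ "supv q C.J"]) simp
    note RD = this
    have Dsub: "?D \<subseteq> {..?R}"
    proof
      fix y assume "y \<in> ?D" hence "y \<le> ?R" by (rule dle)
      thus "y \<in> {..?R}" by simp
    qed
    have finD: "finite ?D" by (rule finite_subset[OF Dsub]) simp
    show ?thesis unfolding rD
    proof (rule Max_eqI[OF finD])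
      fix y assume "y \<in> ?D" thus "y \<le> ?R" by (rule dle)
    next
      show "?R \<in> ?D" by (rule RD)
    qed
  qed
  let ?S = "{rate n1 n2 n3 n4 m GA GB | GA GB.
           GA \<in> carrier_mat (qdim n1 n2 n3 n4 m) (qdim n1 n2 n3 n4 m) \<and>
           GB \<in> carrier_mat (qdim n1 n2 n3 n4 m) (qdim n1 n2 n3 n4 m)}"
  have sle: "r \<le> ?R" if "r \<in> ?S" for r
  proof -
    from that obtain GA GB where G: "r = rate n1 n2 n3 n4 m GA GB"
      "GA \<in> carrier_mat (qdim n1 n2 n3 n4 m) (qdim n1 n2 n3 n4 m)"
      "GB \<in> carrier_mat (qdim n1 n2 n3 n4 m) (qdim n1 n2 n3 n4 m)" by (auto simp only: mem_Collect_eq)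
    show ?thesis unfolding G(1) by (rule rate_le(2)[OF assms G(2,3)])
  qed
  have GA': "?GA \<in> carrier_mat (qdim n1 n2 n3 n4 m) (qdim n1 n2 n3 n4 m)" using GA unfolding q_def .
  have GB': "?GB \<in> carrier_mat (qdim n1 n2 n3 n4 m) (qdim n1 n2 n3 n4 m)" using GB unfolding q_def .
  have ex: "?R = rate n1 n2 n3 n4 m ?GA ?GB \<and> ?GA \<in> carrier_mat (qdim n1 n2 n3 n4 m) (qdim n1 n2 n3 n4 m) \<and>
     ?GB \<in> carrier_mat (qdim n1 n2 n3 n4 m) (qdim n1 n2 n3 n4 m)"
    using rateR GA' GB' by (intro conjI) (rule sym, assumption+)
  hence "?R \<in> ?S" unfolding mem_Collect_eq by (intro exI)
  note RS = this
  have Ssub: "?S \<subseteq> {..?R}"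
  proof
    fix y assume "y \<in> ?S" hence "y \<le> ?R" by (rule sle)
    thus "y \<in> {..?R}" by simp
  qed
  have finS: "finite ?S" by (rule finite_subset[OF Ssub]) simp
  show ?thesis unfolding linear_capacity_def
  proof (rule Max_eqI[OF finS])
    fix y assume "y \<in> ?S" thus "y \<le> ?R" by (rule sle)
  next
    show "?R \<in> ?S" by (rule RS)
  qed
qed

end
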